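(* For every $b>1$, every $b'$ with $1\le b'<b$, and every positive integer $n$, there is an instance with $n+2$ vertices in which $C_o(s)=1$ while the partially naive agent with true bias $b$ and believed bias $b'$, with ties in its choices broken in favor of edges not leading directly to $t$, incurs cost $b^n$. In particular, optimistic partially naive agents can have cost ratio exponential in the number of vertices.
   Context: An instance is a finite directed acyclic graph $G=(V,E)$ with nonnegative edge costs $c(u,v)$, start node $s$ and target node $t$, where $t$ is the unique node with no outgoing edges; $C_o(u)$ is the minimum cost of a $u$–$t$ path. For a parameter $\beta$, the sophisticated agent with bias $\beta$ is defined by $C^{\beta}(t)=0$ and, for $u\ne t$, $S^\beta(u)\in\arg\min_{v:(u,v)\in E}(\beta\,c(u,v)+C^\beta(v))$, $C^\beta(u)=c(u,S^\beta(u))+C^\beta(S^\beta(u))$. Let $C_s'=C^{b'}$. The partially naive agent with true bias $b$ and believed bias $b'$: $C_p(t)=0$, and for $u\neq t$, $S_p(u)\in\arg\min_{v:(u,v)\in E}(b\,c(u,v)+C_s'(v))$, $C_p(u)=c(u,S_p(u))+C_p(S_p(u))$; its incurred cost is $C_p(s)$. It is called optimistic if $b'<b$. *)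

theory Defs
  imports Complex_Main
begin

definition is_instance ::
  "nat set \<Rightarrow> (nat \<times> nat) set \<Rightarrow> (nat \<times> nat \<Rightarrow> real) \<Rightarrow> nat \<Rightarrow> nat \<Rightarrow> bool" where
  "is_instance V E c s t \<longleftrightarrow>
     finite V \<and> E \<subseteq> V \<times> V \<and> acyclic E \<and> s \<in> V \<and> t \<in> V \<and>
     (\<forall>u\<in>V. (\<not> (\<exists>v. (u, v) \<in> E)) \<longleftrightarrow> u = t) \<and>
     (\<forall>e\<in>E. 0 \<le> c e)"

definition is_path :: "(nat \<times> nat) set \<Rightarrow> nat list \<Rightarrow> nat \<Rightarrow> nat \<Rightarrow> bool" where
  "is_path E p u v \<longleftrightarrow> p \<noteq> [] \<and> hd p = u \<and> last p = v \<and>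
     (\<forall>i. i + 1 < length p \<longrightarrow> (p ! i, p ! (i + 1)) \<in> E)"

definition path_cost :: "(nat \<times> nat \<Rightarrow> real) \<Rightarrow> nat list \<Rightarrow> real" where
  "path_cost c p = (\<Sum>i<length p - 1. c (p ! i, p ! (i + 1)))"

definition opt_cost :: "(nat \<times> nat) set \<Rightarrow> (nat \<times> nat \<Rightarrow> real) \<Rightarrow> nat \<Rightarrow> nat \<Rightarrow> real" where
  "opt_cost E c u t = (INF p \<in> {p. is_path E p u t}. path_cost c p)"

definition soph_agent ::
  "nat set \<Rightarrow> (nat \<times> nat) set \<Rightarrow> (nat \<times> nat \<Rightarrow> real) \<Rightarrow> nat \<Rightarrow> real
     \<Rightarrow> (nat \<Rightarrow> nat) \<Rightarrow> (nat \<Rightarrow> real) \<Rightarrow> bool" where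
  "soph_agent V E c t \<beta> S C \<longleftrightarrow> C t = 0 \<and>
     (\<forall>u\<in>V - {t}. (u, S u) \<in> E \<and>
        (\<forall>v. (u, v) \<in> E \<longrightarrow> \<beta> * c (u, S u) + C (S u) \<le> \<beta> * c (u, v) + C v) \<and>
        C u = c (u, S u) + C (S u))"

text \<open>Sp, Cp form the partially naive agent with true bias b, given C_s' = Cs
  (cost function of the sophisticated agent with believed bias), with ties broken
  in favour of edges not leading directly to t.\<close>
definition pn_agent ::
  "nat set \<Rightarrow> (nat \<times> nat) set \<Rightarrow> (nat \<times> nat \<Rightarrow> real) \<Rightarrow> nat \<Rightarrow> real \<Rightarrow> (nat \<Rightarrow> real)
     \<Rightarrow> (nat \<Rightarrow> nat) \<Rightarrow> (nat \<Rightarrow> real) \<Rightarrow> bool" where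
  "pn_agent V E c t b Cs Sp Cp \<longleftrightarrow> Cp t = 0 \<and>
     (\<forall>u\<in>V - {t}. (u, Sp u) \<in> E \<and>
        (\<forall>v. (u, v) \<in> E \<longrightarrow> b * c (u, Sp u) + Cs (Sp u) \<le> b * c (u, v) + Cs v) \<and>
        (Sp u = t \<longrightarrow> (\<forall>v. (u, v) \<in> E \<and> v \<noteq> t \<longrightarrow>
            b * c (u, t) + Cs t < b * c (u, v) + Cs v)) \<and>
        Cp u = c (u, Sp u) + Cp (Sp u))"

end

theory Submission
  imports Defs
begin

theorem mainTheorem11:
  fixes b b' :: real and n :: nat
  assumes "b > 1" and "1 \<le> b'" and "b' < b" and "n > 0"
  shows "\<exists>V E c s t. is_instance V E c s t \<and> card V = n + 2 \<and> opt_cost E c s t = 1 \<and>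
     (\<exists>S' Cs Sp Cp. soph_agent V E c t b' S' Cs \<and> pn_agent V E c t b Cs Sp Cp) \<and>
     (\<forall>S' Cs Sp Cp. soph_agent V E c t b' S' Cs \<and> pn_agent V E c t b Cs Sp Cp
        \<longrightarrow> Cp s = b ^ n)"
proof -
  define V where "V = {0..Suc n}"
  define E where "E = {(u,v). (u < n \<and> v = Suc u) \<or> (u \<le> n \<and> v = Suc n)}"
  define c where "c = (\<lambda>(x::nat,y::nat). if y = Suc n then b ^ x else (0::real))"
  have bpos: "b > 0" using assms by simp
  have cnn: "\<And>e. 0 \<le> c e" unfolding c_def using bpos by auto
  have E_iff: "\<And>u v. (u,v) \<in> E \<longleftrightarrow> (u < n \<and> v = Suc u) \<or> (u \<le> n \<and> v = Suc n)"
    unfolding E_def by auto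
  have inst: "is_instance V E c 0 (Suc n)"
    unfolding is_instance_def
  proof (intro conjI)
    show "finite V" unfolding V_def by simp
    show "E \<subseteq> V \<times> V" unfolding E_def V_def by auto
    have "E \<subseteq> less_than" unfolding E_def by auto
    then show "acyclic E" by (meson wf_acyclic wf_less_than wf_subset)
    show "0 \<in> V" "Suc n \<in> V" unfolding V_def by auto
    show "\<forall>u\<in>V. (\<nexists>v. (u, v) \<in> E) = (u = Suc n)" unfolding V_def E_iff by auto
    show "\<forall>e\<in>E. 0 \<le> c e" using cnn by auto
  qed
  have card: "card V = n + 2" unfolding V_def by simp
  have pathlb: "1 \<le> path_cost c p" if P: "is_path E p 0 (Suc n)" for p
  proof -
    have ne: "p \<noteq> []" and hd: "hd p = 0" and la: "last p = Suc n"
      and ed: "\<And>i. i + 1 < length p \<Longrightarrow> (p ! i, p ! (i + 1)) \<in> E"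
      using P unfolding is_path_def by auto
    have len: "length p \<ge> 2"
    proof (rule ccontr)
      assume "\<not> length p \<ge> 2"
      with ne have "length p = 1" by (cases p) (auto simp: Suc_le_eq)
      then obtain x where "p = [x]" by (cases p) auto
      with hd la show False by simp
    qed
    define m where "m = length p - 2"
    have lm: "p ! (m+1) = Suc n" using la len ne unfolding m_def
      by (metis Suc_1 Suc_diff_Suc Suc_eq_plus1 diff_Suc_1 last_conv_nth less_le_trans lessI)
    have "(p ! m, p ! (m+1)) \<in> E" using ed[of m] len unfolding m_def by simp
    then have "p ! m \<le> n" using lm E_iff by auto
    have "1 \<le> c (p ! m, p ! (m+1))" using lm assms(1) unfolding c_def by simp
    also have "\<dots> \<le> path_cost c p" unfolding path_cost_def
      by (rule member_le_sum) (use len cnn in \<open>auto simp: m_def\<close>)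
    finally show ?thesis .
  qed
  have opt: "opt_cost E c 0 (Suc n) = 1"
    unfolding opt_cost_def
  proof (rule cInf_eq_minimum)
    have "is_path E [0, Suc n] 0 (Suc n)" unfolding is_path_def E_iff
      by (auto simp: nth_Cons split: nat.splits)
    moreover have "path_cost c [0, Suc n] = 1" unfolding path_cost_def c_def by simp
    ultimately show "1 \<in> path_cost c ` {p. is_path E p 0 (Suc n)}" by force
    show "\<And>y. y \<in> path_cost c ` {p. is_path E p 0 (Suc n)} \<Longrightarrow> 1 \<le> y"
      using pathlb by auto
  qed
  define S' where "S' = (\<lambda>i::nat. Suc n)"
  define Cs where "Cs = (\<lambda>i::nat. if i = Suc n then 0 else b ^ i)"
  define Sp where "Sp = (\<lambda>i::nat. if i < n then Suc i else Suc n)"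
  define Cp where "Cp = (\<lambda>i::nat. if i \<le> n then b ^ n else 0)"
  have ex1: "soph_agent V E c (Suc n) b' S' Cs"
    unfolding soph_agent_def
  proof (intro conjI ballI allI impI)
    show "Cs (Suc n) = 0" by (simp add: Cs_def)
  next
    fix u assume u: "u \<in> V - {Suc n}"
    then have un: "u \<le> n" unfolding V_def by auto
    show "(u, S' u) \<in> E" using un by (simp add: E_iff S'_def)
    show "Cs u = c (u, S' u) + Cs (S' u)" using un by (simp add: S'_def Cs_def c_def)
    fix v assume "(u, v) \<in> E"
    then have "v = Suc u \<and> u < n \<or> v = Suc n" by (auto simp: E_iff)
    then show "b' * c (u, S' u) + Cs (S' u) \<le> b' * c (u, v) + Cs v"
    proof
      assume h: "v = Suc u \<and> u < n"
      have "b' * b ^ u \<le> b * b ^ u" using assms bpos by simp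
      then show ?thesis using h by (simp add: S'_def Cs_def c_def)
    qed (simp add: S'_def Cs_def c_def)
  qed
  have ex2: "pn_agent V E c (Suc n) b Cs Sp Cp"
    unfolding pn_agent_def
  proof (intro conjI ballI allI impI)
    show "Cp (Suc n) = 0" by (simp add: Cp_def)
  next
    fix u assume u: "u \<in> V - {Suc n}"
    then have un: "u \<le> n" unfolding V_def by auto
    show "(u, Sp u) \<in> E" using un by (auto simp: E_iff Sp_def)
    show "Cp u = c (u, Sp u) + Cp (Sp u)" using un
      by (auto simp: Sp_def Cp_def c_def)
    { fix v assume "(u, v) \<in> E"
      then have "v = Suc u \<and> u < n \<or> v = Suc n" by (auto simp: E_iff)
      then show "b * c (u, Sp u) + Cs (Sp u) \<le> b * c (u, v) + Cs v"
        using un by (auto simp: Sp_def Cs_def c_def) }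
    { assume "Sp u = Suc n"
      then have "u = n" using un by (auto simp: Sp_def split: if_splits)
      fix v assume "(u, v) \<in> E \<and> v \<noteq> Suc n"
      then show "b * c (u, Suc n) + Cs (Suc n) < b * c (u, v) + Cs v"
        using \<open>u = n\<close> by (auto simp: E_iff) }
  qed
  have uniq: "Cp' 0 = b ^ n" if A: "soph_agent V E c (Suc n) b' S2 Cs2 \<and> pn_agent V E c (Suc n) b Cs2 Sp2 Cp'"
    for S2 Cs2 Sp2 Cp'
  proof -
    have sa: "\<And>u. u \<le> n \<Longrightarrow> (u, S2 u) \<in> E \<and>
        (\<forall>v. (u, v) \<in> E \<longrightarrow> b' * c (u, S2 u) + Cs2 (S2 u) \<le> b' * c (u, v) + Cs2 v) \<and>
        Cs2 u = c (u, S2 u) + Cs2 (S2 u)" and cs0: "Cs2 (Suc n) = 0"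
      using A unfolding soph_agent_def V_def by auto
    have pa: "\<And>u. u \<le> n \<Longrightarrow> (u, Sp2 u) \<in> E \<and>
        (\<forall>v. (u, v) \<in> E \<longrightarrow> b * c (u, Sp2 u) + Cs2 (Sp2 u) \<le> b * c (u, v) + Cs2 v) \<and>
        (Sp2 u = Suc n \<longrightarrow> (\<forall>v. (u, v) \<in> E \<and> v \<noteq> Suc n \<longrightarrow>
            b * c (u, Suc n) + Cs2 (Suc n) < b * c (u, v) + Cs2 v)) \<and>
        Cp' u = c (u, Sp2 u) + Cp' (Sp2 u)" and cp0: "Cp' (Suc n) = 0"
      using A unfolding pn_agent_def V_def by auto
    have csv: "Cs2 (n - k) = b ^ (n - k)" for k
    proof (induction k)
      case 0
      from sa[of n] have "S2 n = Suc n" by (auto simp: E_iff)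
      then show ?case using sa[of n] cs0 by (simp add: c_def)
    next
      case (Suc k)
      show ?case
      proof (cases "k < n")
        case False then show ?thesis using Suc by simp
      next
        case True
        define u where "u = n - Suc k"
        have uk: "Suc u = n - k" "u < n" using True unfolding u_def by auto
        have IH: "Cs2 (Suc u) = b ^ Suc u" using Suc uk by simp
        have "S2 u = Suc n"
        proof (rule ccontr)
          assume "S2 u \<noteq> Suc n"
          then have su: "S2 u = Suc u" using sa[of u] uk by (auto simp: E_iff)
          have "(u, Suc n) \<in> E" using uk by (simp add: E_iff)
          then have "b' * c (u, S2 u) + Cs2 (S2 u) \<le> b' * c (u, Suc n) + Cs2 (Suc n)"
            using sa[of u] uk by auto
          then have "b ^ Suc u \<le> b' * b ^ u" using su IH cs0 uk by (simp add: c_def)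
          moreover have "b' * b ^ u < b * b ^ u" using assms bpos by simp
          ultimately show False by simp
        qed
        then show ?thesis using sa[of u] uk cs0 unfolding u_def[symmetric]
          by (simp add: c_def)
      qed
    qed
    have cpv: "Cp' (n - k) = b ^ n" for k
    proof (induction k)
      case 0
      from pa[of n] have "Sp2 n = Suc n" by (auto simp: E_iff)
      then show ?case using pa[of n] cp0 by (simp add: c_def)
    next
      case (Suc k)
      show ?case
      proof (cases "k < n")
        case False then show ?thesis using Suc by simp
      next
        case True
        define u where "u = n - Suc k"
        have uk: "Suc u = n - k" "u < n" using True unfolding u_def by auto
        have IH: "Cp' (Suc u) = b ^ n" using Suc uk by simp
        have csu: "Cs2 (Suc u) = b ^ Suc u" using csv[of k] uk by simp
        have "Sp2 u \<noteq> Suc n"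
        proof
          assume h: "Sp2 u = Suc n"
          have "(u, Suc u) \<in> E \<and> Suc u \<noteq> Suc n" using uk by (simp add: E_iff)
          then have "b * c (u, Suc n) + Cs2 (Suc n) < b * c (u, Suc u) + Cs2 (Suc u)"
            using pa[of u] uk h by auto
          then show False using csu cs0 uk by (simp add: c_def del: power_Suc) (metis power_Suc less_irrefl)
        qed
        then have "Sp2 u = Suc u" using pa[of u] uk by (auto simp: E_iff)
        then show ?thesis using pa[of u] uk IH unfolding u_def[symmetric]
          by (simp add: c_def)
      qed
    qed
    show ?thesis using cpv[of n] by simp
  qed
  show ?thesis
    apply (rule exI[of _ V], rule exI[of _ E], rule exI[of _ c], rule exI[of _ 0], rule exI[of _ "Suc n"])
    using inst card opt ex1 ex2 uniq by blast
qed

end
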